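(* There are absolute constants $C,c>0$ such that the following holds. Let $P$ be a set of $n$ points in $\mathbb{R}^2$ in general position, let $\Pi\subseteq\binom{P}{2}$, let $0<\epsilon\le 1$, $0<\sigma\le 1$, and let $r\ge1$ be an integer. Then every subfamily ${\cal K}\subseteq{\cal K}(P,\Pi,\epsilon,\sigma)$ admits a point transversal (a set of points meeting every member of ${\cal K}$) of cardinality at most $$C\left(r\cdot f_2(c\,\epsilon\,\sigma\, r)+\frac{r^2|\Pi|}{\sigma\,\epsilon^2 n^2}\right).$$
   Context: General position: no three points of $P$ are collinear and no two lie on a common vertical line. $\binom{P}{2}$ denotes the set of all segments (edges) spanned by pairs of points of $P$. A convex set $K$ is $(\epsilon,\sigma)$-restricted to the graph $(P,\Pi)$ if $P\cap K$ contains a subset $P_K$ of exactly $\lceil\epsilon n\rceil$ points such that $\Pi_K:=\binom{P_K}{2}\cap\Pi$ contains at least $\sigma\binom{\lceil \epsilon n\rceil}{2}$ edges. ${\cal K}(P,\Pi,\epsilon,\sigma)$ denotes the family of all convex sets that are $(\epsilon,\sigma)$-restricted to $(P,\Pi)$. $f_2(x)$ denotes the smallest integer $f$ such that every finite point set $P'\subset\mathbb{R}^2$ admits a set of at most $f$ points meeting every convex set $K$ with $|K\cap P'|\ge x|P'|$; by convention $f_2(x)=1$ for $x\ge 1$. *)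

theory Defs
  imports "HOL-Analysis.Analysis"
begin

type_synonym pt = "real \<times> real"

definition general_position :: "pt set \<Rightarrow> bool" where
  "general_position P \<longleftrightarrow>
     (\<forall>p\<in>P. \<forall>q\<in>P. \<forall>s\<in>P. p \<noteq> q \<and> p \<noteq> s \<and> q \<noteq> s \<longrightarrow> \<not> collinear {p, q, s}) \<and>
     (\<forall>p\<in>P. \<forall>q\<in>P. p \<noteq> q \<longrightarrow> fst p \<noteq> fst q)"

definition edges :: "'a set \<Rightarrow> 'a set set" where
  "edges P = {e. \<exists>p\<in>P. \<exists>q\<in>P. p \<noteq> q \<and> e = {p, q}}"

definition restricted :: "pt set \<Rightarrow> pt set set \<Rightarrow> real \<Rightarrow> real \<Rightarrow> pt set \<Rightarrow> bool" where
  "restricted P E eps sg K \<longleftrightarrow> convex K \<and>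
     (\<exists>PK. PK \<subseteq> P \<inter> K \<and> card PK = nat \<lceil>eps * real (card P)\<rceil> \<and>
        real (card (edges PK \<inter> E)) \<ge> sg * real (nat \<lceil>eps * real (card P)\<rceil> choose 2))"

definition restricted_family :: "pt set \<Rightarrow> pt set set \<Rightarrow> real \<Rightarrow> real \<Rightarrow> pt set set" where
  "restricted_family P E eps sg = {K. restricted P E eps sg K}"

definition f2 :: "real \<Rightarrow> nat" where
  "f2 x = (if x \<ge> 1 then 1 else
     (LEAST f. \<forall>P'::pt set. finite P' \<and> P' \<noteq> {} \<longrightarrow>
        (\<exists>T. finite T \<and> card T \<le> f \<and>
           (\<forall>K. convex K \<and> real (card (K \<inter> P')) \<ge> x * real (card P') \<longrightarrow> T \<inter> K \<noteq> {}))))"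

end

theory Submission
  imports Defs
begin


lemma sel:
  fixes v :: "'a \<Rightarrow> real"
  assumes "finite F" "k > 0"
  shows "\<exists>S\<subseteq>F. card S * k \<le> card F \<and>
     (\<forall>Q\<subseteq>F. (\<forall>a\<in>Q. \<forall>b\<in>Q. \<forall>y\<in>F. v a \<le> v y \<and> v y \<le> v b \<longrightarrow> y \<in> Q) \<and> card Q \<ge> k \<longrightarrow> Q \<inter> S \<noteq> {})"
  using assms(1)
proof (induction "card F" arbitrary: F rule: less_induct)
  case less
  show ?case
  proof (cases "card F < k")
    case True
    show ?thesis
    proof (intro exI[of _ "{}"] conjI allI impI)
      fix Q assume "Q \<subseteq> F" "(\<forall>a\<in>Q. \<forall>b\<in>Q. \<forall>y\<in>F. v a \<le> v y \<and> v y \<le> v b \<longrightarrow> y \<in> Q) \<and> k \<le> card Q"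
      then have "card Q \<le> card F" using card_mono less.prems by blast
      then show "Q \<inter> {} \<noteq> {}" using True \<open>_ \<and> k \<le> card Q\<close> by linarith
    qed auto
  next
    case False
    define W where "W = {b \<in> v ` F. card {f\<in>F. v f \<le> b} \<ge> k}"
    have finW: "finite W" using less.prems unfolding W_def by simp
    have "Max (v ` F) \<in> W"
    proof -
      have ne: "F \<noteq> {}" using False assms(2) by auto
      have "{f\<in>F. v f \<le> Max (v ` F)} = F" using less.prems by auto
      then show ?thesis unfolding W_def using ne less.prems False by auto
    qed
    then have Wne: "W \<noteq> {}" by auto
    define a where "a = Min W"
    have aW: "a \<in> W" unfolding a_def using finW Wne by auto
    have amin: "\<And>b. b \<in> W \<Longrightarrow> a \<le> b" unfolding a_def using finW by auto
    define G where "G = {f\<in>F. v f \<le> a}"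
    have cG: "card G \<ge> k" using aW unfolding W_def G_def by auto
    obtain g where g: "g \<in> F" "v g = a" using aW unfolding W_def by auto
    define F' where "F' = F - G"
    have GF: "G \<subseteq> F" unfolding G_def by auto
    have finG: "finite G" using GF less.prems by (rule finite_subset)
    have cF': "card F' = card F - card G" unfolding F'_def using finG GF by (rule card_Diff_subset)
    have cGF: "card G \<le> card F" using less.prems GF by (rule card_mono)
    have lt: "card F' < card F" using cF' cG assms(2) cGF by arith
    have finF': "finite F'" using less.prems unfolding F'_def by auto
    obtain S' where S': "S' \<subseteq> F'" "card S' * k \<le> card F'"
      "\<forall>Q\<subseteq>F'. (\<forall>a\<in>Q. \<forall>b\<in>Q. \<forall>y\<in>F'. v a \<le> v y \<and> v y \<le> v b \<longrightarrow> y \<in> Q) \<and> card Q \<ge> k \<longrightarrow> Q \<inter> S' \<noteq> {}"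
      using less.hyps[OF lt finF'] by blast
    have cardS: "card (insert g S') * k \<le> card F"
    proof -
      have "card (insert g S') \<le> card S' + 1" by (simp add: card_insert_le_m1)
      then have "card (insert g S') * k \<le> card S' * k + k" by (metis add_mult_distrib mult_1 mult_le_mono1)
      also have "\<dots> \<le> card F' + k" using S'(2) by simp
      also have "\<dots> \<le> card F" using cF' cG cGF by arith
      finally show ?thesis .
    qed
    show ?thesis
    proof (intro exI[of _ "insert g S'"] conjI allI impI)
      show "insert g S' \<subseteq> F" using g S'(1) unfolding F'_def by auto
      show "card (insert g S') * k \<le> card F" by (rule cardS)
      fix Q assume QA0: "Q \<subseteq> F" and QA: "(\<forall>a\<in>Q. \<forall>b\<in>Q. \<forall>y\<in>F. v a \<le> v y \<and> v y \<le> v b \<longrightarrow> y \<in> Q) \<and> k \<le> card Q"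
      note QF = QA0
      have Qi: "\<forall>a\<in>Q. \<forall>b\<in>Q. \<forall>y\<in>F. v a \<le> v y \<and> v y \<le> v b \<longrightarrow> y \<in> Q"
        using QA by (rule conjunct1)
      have Qk: "k \<le> card Q" using QA by (rule conjunct2)
      have Qne: "Q \<noteq> {}" using Qk assms(2) by (metis card.empty not_le)
      show "Q \<inter> insert g S' \<noteq> {}"
      proof (cases "(\<exists>q\<in>Q. v q \<le> a) \<and> (\<exists>q\<in>Q. a \<le> v q)")
        case True
        then obtain q1 q2 where q: "q1 \<in> Q" "q2 \<in> Q" "v q1 \<le> v g" "v g \<le> v q2" using g by auto
        have "g \<in> Q" using Qi[rule_format, OF q(1) q(2) g(1)] q(3,4) by blast
        then show ?thesis by blast
      next
        case F2: False
        show ?thesis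
        proof (cases "\<forall>q\<in>Q. a < v q")
          case True
          then have QF': "Q \<subseteq> F'" using QF unfolding F'_def G_def by (auto simp: not_le)
          have Qi': "\<forall>a\<in>Q. \<forall>b\<in>Q. \<forall>y\<in>F'. v a \<le> v y \<and> v y \<le> v b \<longrightarrow> y \<in> Q"
          proof (intro ballI impI)
            fix a b y assume "a \<in> Q" "b \<in> Q" "y \<in> F'" "v a \<le> v y \<and> v y \<le> v b"
            moreover have "y \<in> F" using \<open>y \<in> F'\<close> unfolding F'_def by simp
            ultimately show "y \<in> Q" using Qi[rule_format, OF \<open>a \<in> Q\<close> \<open>b \<in> Q\<close> \<open>y \<in> F\<close>] by blast
          qed
          have "Q \<inter> S' \<noteq> {}" using S'(3)[rule_format, OF QF' conjI[OF Qi' Qk]] .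
          then show ?thesis by blast
        next
          case False
          then have all: "\<forall>q\<in>Q. v q < a" using F2 by (meson not_le)
          have finQ: "finite Q" using QF less.prems finite_subset by blast
          define b where "b = Max (v ` Q)"
          have bQ: "b \<in> v ` Q" unfolding b_def using finQ Qne by auto
          then have ba: "b < a" using all by auto
          have "Q \<subseteq> {f\<in>F. v f \<le> b}" using QF finQ unfolding b_def by auto
          then have "card Q \<le> card {f\<in>F. v f \<le> b}" using less.prems by (intro card_mono) auto
          then have "b \<in> W" unfolding W_def using bQ QF Qk by auto
          then show ?thesis using amin[of b] ba by linarith
        qed
      qed
    qed
  qed
qed





lemma vert:
  fixes a b c :: pt
  assumes "convex K" "a \<in> K" "b \<in> K" "fst a = fst c" "fst b = fst c"
    "snd a \<le> snd c" "snd c \<le> snd b"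
  shows "c \<in> K"
proof (cases "snd a = snd b")
  case True
  then have "c = a" using assms(4,6,7) by (simp add: prod_eq_iff)
  then show ?thesis using assms(2) by simp
next
  case False
  then have ab: "snd a < snd b" using assms(6,7) by linarith
  define u where "u = (snd c - snd a) / (snd b - snd a)"
  have u0: "0 \<le> u" and u1: "u \<le> 1" using ab assms(6,7) unfolding u_def by (auto simp: field_simps)
  have "c = (1 - u) *\<^sub>R a + u *\<^sub>R b"
  proof (rule prod_eqI)
    show "fst c = fst ((1 - u) *\<^sub>R a + u *\<^sub>R b)" using assms(4,5) by (simp add: algebra_simps)
    have d: "snd b - snd a \<noteq> 0" using ab by simp
    have "u * (snd b - snd a) = snd c - snd a" unfolding u_def using d by simp
    moreover have "snd ((1 - u) *\<^sub>R a + u *\<^sub>R b) = snd a + u * (snd b - snd a)" by (simp add: algebra_simps)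
    ultimately show "snd c = snd ((1 - u) *\<^sub>R a + u *\<^sub>R b)" by simp
  qed
  then show ?thesis using convexD[OF assms(1) assms(2) assms(3)] u0 u1 by simp
qed

definition cr :: "real \<Rightarrow> pt \<times> pt \<Rightarrow> pt" where
  "cr t f = fst f + ((t - fst (fst f)) / (fst (snd f) - fst (fst f))) *\<^sub>R (snd f - fst f)"

lemma cr_fst:
  assumes "fst (fst f) < fst (snd f)"
  shows "fst (cr t f) = t"
proof -
  have d: "fst (snd f) - fst (fst f) \<noteq> 0" using assms by simp
  have "((t - fst (fst f)) / (fst (snd f) - fst (fst f))) * (fst (snd f) - fst (fst f)) = t - fst (fst f)"
    using d by simp
  then show ?thesis unfolding cr_def by simp
qed

lemma cr_in:
  assumes "convex K" "fst f \<in> K" "snd f \<in> K" "fst (fst f) \<le> t" "t \<le> fst (snd f)" "fst (fst f) < fst (snd f)"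
  shows "cr t f \<in> K"
proof -
  define l where "l = (t - fst (fst f)) / (fst (snd f) - fst (fst f))"
  have l0: "0 \<le> l" and l1: "l \<le> 1" using assms(4-6) unfolding l_def by (auto simp: field_simps)
  have "cr t f = (1 - l) *\<^sub>R fst f + l *\<^sub>R snd f" unfolding cr_def l_def[symmetric]
    by (simp add: algebra_simps)
  then show ?thesis using convexD[OF assms(1) assms(2) assms(3)] l0 l1 by simp
qed

lemma crossing:
  fixes t :: real and F :: "(pt \<times> pt) set"
  assumes "finite F" "k > 0"
    and F: "\<forall>f\<in>F. fst (fst f) \<le> t \<and> t \<le> fst (snd f) \<and> fst (fst f) < fst (snd f)"
  shows "\<exists>T. finite T \<and> card T * k \<le> card F \<and>
     (\<forall>K. convex K \<and> card {f\<in>F. fst f \<in> K \<and> snd f \<in> K} \<ge> k \<longrightarrow> T \<inter> K \<noteq> {})"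
proof -
  obtain S where S: "S \<subseteq> F" "card S * k \<le> card F"
    "\<forall>Q\<subseteq>F. (\<forall>a\<in>Q. \<forall>b\<in>Q. \<forall>y\<in>F. snd (cr t a) \<le> snd (cr t y) \<and> snd (cr t y) \<le> snd (cr t b) \<longrightarrow> y \<in> Q) \<and> card Q \<ge> k \<longrightarrow> Q \<inter> S \<noteq> {}"
    using sel[OF assms(1,2), of "\<lambda>f. snd (cr t f)"] by blast
  have finS: "finite S" using S(1) assms(1) by (rule finite_subset)
  have "card (cr t ` S) * k \<le> card F"
    using card_image_le[OF finS, of "cr t"] S(2) by (meson le_trans mult_le_mono1)
  moreover have "\<forall>K. convex K \<and> card {f\<in>F. fst f \<in> K \<and> snd f \<in> K} \<ge> k \<longrightarrow> cr t ` S \<inter> K \<noteq> {}"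
  proof (intro allI impI)
    fix K assume KA: "convex K \<and> card {f\<in>F. fst f \<in> K \<and> snd f \<in> K} \<ge> k"
    have cK: "convex K" using KA by (rule conjunct1)
    have kK: "card {f\<in>F. fst f \<in> K \<and> snd f \<in> K} \<ge> k" using KA by (rule conjunct2)
    define Q where "Q = {f\<in>F. cr t f \<in> K}"
    have QF: "Q \<subseteq> F" unfolding Q_def by blast
    have sub: "{f\<in>F. fst f \<in> K \<and> snd f \<in> K} \<subseteq> Q"
    proof
      fix f assume "f \<in> {f\<in>F. fst f \<in> K \<and> snd f \<in> K}"
      then have fF: "f \<in> F" and "fst f \<in> K" "snd f \<in> K" by auto
      moreover have "fst (fst f) \<le> t" "t \<le> fst (snd f)" "fst (fst f) < fst (snd f)" using F fF by auto
      ultimately have "cr t f \<in> K" using cr_in[OF cK] by blast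
      then show "f \<in> Q" unfolding Q_def using fF by blast
    qed
    have finQ: "finite Q" using QF assms(1) by (rule finite_subset)
    have Qk: "card Q \<ge> k" using card_mono[OF finQ sub] kK by linarith
    have Qi: "\<forall>a\<in>Q. \<forall>b\<in>Q. \<forall>y\<in>F. snd (cr t a) \<le> snd (cr t y) \<and> snd (cr t y) \<le> snd (cr t b) \<longrightarrow> y \<in> Q"
    proof (intro ballI impI)
      fix a b y assume aQ: "a \<in> Q" and bQ: "b \<in> Q" and yF: "y \<in> F"
        and le: "snd (cr t a) \<le> snd (cr t y) \<and> snd (cr t y) \<le> snd (cr t b)"
      have aF: "a \<in> F" and aK: "cr t a \<in> K" using aQ unfolding Q_def by auto
      have bF: "b \<in> F" and bK: "cr t b \<in> K" using bQ unfolding Q_def by auto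
      have fa: "fst (cr t a) = t" using F aF by (intro cr_fst) blast
      have fb: "fst (cr t b) = t" using F bF by (intro cr_fst) blast
      have fy: "fst (cr t y) = t" using F yF by (intro cr_fst) blast
      have "cr t y \<in> K" using vert[OF cK aK bK] fa fb fy le by simp
      then show "y \<in> Q" unfolding Q_def using yF by blast
    qed
    have "Q \<inter> S \<noteq> {}" using S(3)[rule_format, OF QF conjI[OF Qi Qk]] .
    then obtain f where "f \<in> Q" "f \<in> S" by blast
    then have "cr t f \<in> cr t ` S \<inter> K" unfolding Q_def by blast
    then show "cr t ` S \<inter> K \<noteq> {}" by blast
  qed
  ultimately show ?thesis using finS by blast
qed





definition rk :: "pt set \<Rightarrow> pt \<Rightarrow> nat" where
  "rk P p = card {q\<in>P. fst q < fst p}"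

lemma rk_less:
  assumes "finite P" "p \<in> P" "fst p < fst q"
  shows "rk P p < rk P q"
proof -
  have "{q'\<in>P. fst q' < fst p} \<subset> {q'\<in>P. fst q' < fst q}"
    using assms by auto
  then show ?thesis unfolding rk_def using assms(1) by (simp add: psubset_card_mono)
qed

lemma rk_mono:
  assumes "finite P" "fst p \<le> fst q"
  shows "rk P p \<le> rk P q"
proof -
  have "{q'\<in>P. fst q' < fst p} \<subseteq> {q'\<in>P. fst q' < fst q}"
    using assms by auto
  then show ?thesis unfolding rk_def using assms(1) by (simp add: card_mono)
qed

lemma rk_lt:
  assumes "finite P" "p \<in> P"
  shows "rk P p < card P"
proof -
  have "{q'\<in>P. fst q' < fst p} \<subset> P"
    using assms by auto
  then show ?thesis unfolding rk_def using assms(1) by (simp add: psubset_card_mono)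
qed

lemma rk_inj:
  assumes "finite P" "inj_on fst P"
  shows "inj_on (rk P) P"
proof (rule inj_onI)
  fix p q assume pq: "p \<in> P" "q \<in> P" "rk P p = rk P q"
  show "p = q"
  proof (rule ccontr)
    assume "p \<noteq> q"
    then have "fst p \<noteq> fst q" using assms(2) pq(1,2) by (meson inj_onD)
    then have "fst p < fst q \<or> fst q < fst p" by linarith
    then show False
    proof
      assume "fst p < fst q"
      then have "rk P p < rk P q" by (rule rk_less[OF assms(1) pq(1)])
      then show False using pq(3) by simp
    next
      assume "fst q < fst p"
      then have "rk P q < rk P p" by (rule rk_less[OF assms(1) pq(2)])
      then show False using pq(3) by simp
    qed
  qed
qed

lemma rk_order:
  assumes "finite P" "rk P p < rk P q"
  shows "fst p < fst q"
  using rk_mono[OF assms(1), of q p] assms(2) by linarith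

definition Winj :: "real \<Rightarrow> nat \<Rightarrow> bool" where
  "Winj x f \<longleftrightarrow> (\<forall>P'::pt set. finite P' \<and> P' \<noteq> {} \<and> inj_on fst P' \<longrightarrow>
     (\<exists>T. finite T \<and> card T \<le> f \<and> (\<forall>K. convex K \<and> x * real (card P') \<le> real (card (K \<inter> P')) \<longrightarrow> T \<inter> K \<noteq> {})))"

lemma W_base:
  assumes "x > 1" shows "Winj x 0"
  unfolding Winj_def
proof (intro allI impI)
  fix P' :: "pt set" assume A: "finite P' \<and> P' \<noteq> {} \<and> inj_on fst P'"
  have fin: "finite P'" and ne: "P' \<noteq> {}" using A by auto
  have pos: "card P' > 0" using fin ne by (simp add: card_gt_0_iff)
  show "\<exists>T. finite T \<and> card T \<le> 0 \<and> (\<forall>K. convex K \<and> x * real (card P') \<le> real (card (K \<inter> P')) \<longrightarrow> T \<inter> K \<noteq> {})"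
  proof (intro exI[of _ "{}"] conjI allI impI)
    fix K :: "pt set" assume KA: "convex K \<and> x * real (card P') \<le> real (card (K \<inter> P'))"
    have "card (K \<inter> P') \<le> card P'" using fin by (simp add: card_mono)
    moreover have "real (card P') < x * real (card P')" using pos assms by simp
    ultimately show "{} \<inter> K \<noteq> {}" using KA by linarith
  qed auto
qed

lemma W_step:
  assumes x: "x > 0" and IH: "Winj (9/8*x) f"
  shows "Winj x (2*f + nat \<lceil>16/x^2\<rceil> + 2)"
  unfolding Winj_def
proof (intro allI impI)
  fix P' :: "pt set" assume A: "finite P' \<and> P' \<noteq> {} \<and> inj_on fst P'"
  have finP: "finite P'" and neP: "P' \<noteq> {}" and injP: "inj_on fst P'" using A by auto
  define N where "N = card P'"
  have Npos: "N > 0" unfolding N_def using finP neP by (simp add: card_gt_0_iff)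
  show "\<exists>T. finite T \<and> card T \<le> 2*f + nat \<lceil>16/x^2\<rceil> + 2 \<and> (\<forall>K. convex K \<and> x * real (card P') \<le> real (card (K \<inter> P')) \<longrightarrow> T \<inter> K \<noteq> {})"
  proof (cases "N \<le> 2")
    case True
    show ?thesis
    proof (intro exI[of _ P'] conjI allI impI)
      show "finite P'" by (rule finP)
      show "card P' \<le> 2*f + nat \<lceil>16/x^2\<rceil> + 2" using True unfolding N_def by linarith
      fix K :: "pt set" assume KA: "convex K \<and> x * real (card P') \<le> real (card (K \<inter> P'))"
      have "0 < x * real (card P')" using x Npos unfolding N_def by simp
      then have "card (K \<inter> P') > 0" using KA by linarith
      then show "P' \<inter> K \<noteq> {}" by (metis Int_commute card.empty less_irrefl)
    qed
  next
    case False
    then have N3: "N \<ge> 3" by linarith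
    define h where "h = N div 2"
    define L where "L = {p\<in>P'. rk P' p < h}"
    define R where "R = {p\<in>P'. h \<le> rk P' p}"
    have injr: "inj_on (rk P') P'" using rk_inj[OF finP injP] .
    have cL: "card L \<le> h"
    proof -
      have "card L \<le> card {..<h}"
        by (rule card_inj_on_le[OF inj_on_subset[OF injr]]) (auto simp: L_def)
      then show ?thesis by simp
    qed
    have cR: "card R \<le> N - h"
    proof -
      have "card R \<le> card {h..<N}"
        by (rule card_inj_on_le[OF inj_on_subset[OF injr]]) (auto simp: R_def N_def rk_lt[OF finP])
      then show ?thesis by simp
    qed
    have LR: "L \<union> R = P'" "L \<inter> R = {}" unfolding L_def R_def by auto
    have finL: "finite L" and finR: "finite R" using finP unfolding L_def R_def by auto
    have injL: "inj_on fst L" and injR: "inj_on fst R" using injP unfolding L_def R_def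
      by (auto intro: inj_on_subset)
    have "\<exists>TL. finite TL \<and> card TL \<le> f \<and> (\<forall>K. convex K \<and> 9/8*x * real (card L) \<le> real (card (K \<inter> L)) \<longrightarrow> L \<noteq> {} \<longrightarrow> TL \<inter> K \<noteq> {})"
    proof (cases "L = {}")
      case True then show ?thesis by (intro exI[of _ "{}"]) auto
    next
      case False
      then show ?thesis using IH[unfolded Winj_def, rule_format, OF conjI[OF finL conjI[OF False injL]]] by blast
    qed
    then obtain TL where TL: "finite TL" "card TL \<le> f"
      "\<forall>K. convex K \<and> 9/8*x * real (card L) \<le> real (card (K \<inter> L)) \<longrightarrow> L \<noteq> {} \<longrightarrow> TL \<inter> K \<noteq> {}"
      by blast
    have "\<exists>TR. finite TR \<and> card TR \<le> f \<and> (\<forall>K. convex K \<and> 9/8*x * real (card R) \<le> real (card (K \<inter> R)) \<longrightarrow> R \<noteq> {} \<longrightarrow> TR \<inter> K \<noteq> {})"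
    proof (cases "R = {}")
      case True then show ?thesis by (intro exI[of _ "{}"]) auto
    next
      case False
      then show ?thesis using IH[unfolded Winj_def, rule_format, OF conjI[OF finR conjI[OF False injR]]] by blast
    qed
    then obtain TR where TR: "finite TR" "card TR \<le> f"
      "\<forall>K. convex K \<and> 9/8*x * real (card R) \<le> real (card (K \<inter> R)) \<longrightarrow> R \<noteq> {} \<longrightarrow> TR \<inter> K \<noteq> {}"
      by blast
    define t where "t = Max (fst ` L)"
    define k where "k = nat \<lceil>(x * real N)^2 / 16\<rceil>"
    have kpos: "k > 0" unfolding k_def using x Npos by simp
    have Fc: "\<forall>f\<in>L \<times> R. fst (fst f) \<le> t \<and> t \<le> fst (snd f) \<and> fst (fst f) < fst (snd f)"
    proof
      fix f assume fLR: "f \<in> L \<times> R"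
      obtain p q where f: "f = (p, q)" and pL: "p \<in> L" and qR: "q \<in> R" using fLR by blast
      have lt: "\<And>p'. p' \<in> L \<Longrightarrow> fst p' < fst q"
      proof -
        fix p' assume "p' \<in> L"
        then have "rk P' p' < rk P' q" using qR unfolding L_def R_def by auto
        then show "fst p' < fst q" by (rule rk_order[OF finP])
      qed
      have "fst p \<le> t" unfolding t_def using finL pL by simp
      moreover have "t \<le> fst q" unfolding t_def using finL pL lt by (subst Max_le_iff) (auto, meson less_imp_le fst_conv)
      ultimately show "fst (fst f) \<le> t \<and> t \<le> fst (snd f) \<and> fst (fst f) < fst (snd f)"
        using f lt[OF pL] by simp
    qed
    obtain Tc where Tc: "finite Tc" "card Tc * k \<le> card (L \<times> R)"
      "\<forall>K. convex K \<and> card {f\<in>L \<times> R. fst f \<in> K \<and> snd f \<in> K} \<ge> k \<longrightarrow> Tc \<inter> K \<noteq> {}"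
      using crossing[OF _ kpos Fc] finL finR by blast
    have cTc: "card Tc \<le> nat \<lceil>16/x^2\<rceil>"
    proof -
      have "card L \<le> N" "card R \<le> N" using cL cR unfolding h_def by auto
      then have "card (L \<times> R) \<le> N * N" by (simp add: card_cartesian_product mult_le_mono)
      then have "card Tc * k \<le> N * N" using Tc(2) by linarith
      then have 1: "real (card Tc) * real k \<le> real N * real N" by (metis of_nat_le_iff of_nat_mult)
      have 2: "(x * real N)^2 / 16 \<le> real k" unfolding k_def by linarith
      have pos: "(x * real N)^2 / 16 > 0" using x Npos by simp
      have "real (card Tc) * ((x * real N)^2 / 16) \<le> real N * real N"
      proof -
        have "real (card Tc) * ((x * real N)^2 / 16) \<le> real (card Tc) * real k"
          using 2 by (rule mult_left_mono) simp
        then show ?thesis using 1 by linarith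
      qed
      then have "real (card Tc) \<le> real N * real N / ((x * real N)^2 / 16)"
        using pos by (simp add: pos_le_divide_eq)
      also have "\<dots> = 16 / x^2" using x Npos by (simp add: field_simps power2_eq_square)
      finally show ?thesis by linarith
    qed
    define T where "T = TL \<union> TR \<union> Tc"
    show ?thesis
    proof (intro exI[of _ T] conjI allI impI)
      show "finite T" unfolding T_def using TL(1) TR(1) Tc(1) by simp
      have "card T \<le> card TL + card TR + card Tc" unfolding T_def
        by (meson add_le_mono card_Un_le le_refl order_trans)
      then show "card T \<le> 2*f + nat \<lceil>16/x^2\<rceil> + 2" using TL(2) TR(2) cTc by linarith
      fix K :: "pt set" assume KA: "convex K \<and> x * real (card P') \<le> real (card (K \<inter> P'))"
      have cK: "convex K" using KA by (rule conjunct1)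
      have KN: "x * real N \<le> real (card (K \<inter> P'))" using KA unfolding N_def by (rule conjunct2)
      define a where "a = card (K \<inter> L)"
      define b where "b = card (K \<inter> R)"
      have "K \<inter> P' = (K \<inter> L) \<union> (K \<inter> R)" using LR by blast
      moreover have "(K \<inter> L) \<inter> (K \<inter> R) = {}" using LR by blast
      ultimately have ab: "card (K \<inter> P') = a + b" unfolding a_def b_def using finL finR
        by (simp add: card_Un_disjoint)
      have hN: "2 * h \<le> N" unfolding h_def by simp
      have hN2: "3 * (N - h) \<le> 2 * N" unfolding h_def using N3 by presburger
      show "T \<inter> K \<noteq> {}"
      proof (cases "x * real N / 4 \<le> real a \<and> x * real N / 4 \<le> real b")
        case True
        have eq: "{f\<in>L \<times> R. fst f \<in> K \<and> snd f \<in> K} = (K \<inter> L) \<times> (K \<inter> R)" by auto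
        have "(x * real N / 4) * (x * real N / 4) \<le> real a * real b"
          apply (rule mult_mono) using True x by auto
        then have "(x * real N)^2 / 16 \<le> real (a * b)" by (simp add: power2_eq_square)
        then have "k \<le> a * b" unfolding k_def by simp
        then have "card {f\<in>L \<times> R. fst f \<in> K \<and> snd f \<in> K} \<ge> k" unfolding eq a_def b_def
          by (simp add: card_cartesian_product)
        then have "Tc \<inter> K \<noteq> {}" using Tc(3) cK by blast
        then show ?thesis unfolding T_def by blast
      next
        case False
        show ?thesis
        proof (cases "real b < x * real N / 4")
          case True
          have "real a > 3 * (x * real N) / 4" using True KN ab by simp
          moreover have "9/8*x * real (card L) \<le> 9/8*x * (real N / 2)"
            using cL hN x by (intro mult_left_mono) auto
          moreover have "9/8*x * (real N / 2) = (9/16) * (x * real N)" by simp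
          moreover have "x * real N > 0" using x Npos by simp
          ultimately have "9/8*x * real (card L) \<le> real (card (K \<inter> L))"
            unfolding a_def by linarith
          moreover have "L \<noteq> {}"
          proof
            assume "L = {}"
            then have "a = 0" unfolding a_def by simp
            then show False using \<open>real a > 3 * (x * real N) / 4\<close> x Npos by (auto simp: mult_less_0_iff)
          qed
          ultimately have "TL \<inter> K \<noteq> {}" using TL(3) cK by blast
          then show ?thesis unfolding T_def by blast
        next
          case False2: False
          then have aa: "real a < x * real N / 4" using False by linarith
          have "real b > 3 * (x * real N) / 4" using aa KN ab by simp
          moreover have "9/8*x * real (card R) \<le> 9/8*x * (2 * real N / 3)"
            using cR hN2 x by (intro mult_left_mono) auto
          moreover have "9/8*x * (2 * real N / 3) = (3/4) * (x * real N)" by simp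
          moreover have "x * real N > 0" using x Npos by simp
          ultimately have "9/8*x * real (card R) \<le> real (card (K \<inter> R))"
            unfolding b_def by linarith
          moreover have "R \<noteq> {}"
          proof
            assume "R = {}"
            then have "b = 0" unfolding b_def by simp
            then show False using \<open>real b > 3 * (x * real N) / 4\<close> x Npos by (auto simp: mult_less_0_iff)
          qed
          ultimately have "TR \<inter> K \<noteq> {}" using TR(3) cK by blast
          then show ?thesis unfolding T_def by blast
        qed
      qed
    qed
  qed
qed



lemma W_all:
  assumes "x > 0" shows "\<exists>f. Winj x f"
proof -
  have main: "\<forall>x>0. 1 < x * (9/8)^n \<longrightarrow> (\<exists>f. Winj x f)" for n
  proof (induction n)
    case 0
    then show ?case using W_base by auto
  next
    case (Suc n)
    show ?case
    proof (intro allI impI)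
      fix x :: real assume x0: "x > 0" and xn: "1 < x * (9/8)^Suc n"
      have "1 < (9/8*x) * (9/8)^n" using xn by (simp add: algebra_simps)
      moreover have "9/8*x > 0" using x0 by simp
      ultimately obtain f where "Winj (9/8*x) f" using Suc.IH by blast
      then show "\<exists>f. Winj x f" using W_step[OF x0] by blast
    qed
  qed
  obtain n where n: "1/x < (9/8::real)^n" using real_arch_pow[of "9/8::real" "1/x"] by auto
  then have "1 < x * (9/8)^n" using assms by (simp add: field_simps)
  then show ?thesis using main assms by blast
qed

definition Pr :: "real \<Rightarrow> nat \<Rightarrow> bool" where
  "Pr x f \<longleftrightarrow> (\<forall>P'::pt set. finite P' \<and> P' \<noteq> {} \<longrightarrow>
        (\<exists>T. finite T \<and> card T \<le> f \<and>
           (\<forall>K. convex K \<and> real (card (K \<inter> P')) \<ge> x * real (card P') \<longrightarrow> T \<inter> K \<noteq> {})))"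

definition sh :: "real \<Rightarrow> pt \<Rightarrow> pt" where "sh d p = (fst p + d * snd p, snd p)"
definition ish :: "real \<Rightarrow> pt \<Rightarrow> pt" where "ish d p = (fst p - d * snd p, snd p)"

lemma ish_sh [simp]: "ish d (sh d p) = p" unfolding sh_def ish_def by simp
lemma inj_sh: "inj (sh d)" by (metis injI ish_sh)

lemma linear_sh: "linear (sh d)"
  by (rule linearI) (simp_all add: sh_def algebra_simps)

lemma W_Pr:
  assumes "Winj x f" shows "Pr x f"
  unfolding Pr_def
proof (intro allI impI)
  fix P' :: "pt set" assume A: "finite P' \<and> P' \<noteq> {}"
  have finP: "finite P'" and neP: "P' \<noteq> {}" using A by auto
  define D where "D = (\<lambda>(p, q). (fst q - fst p) / (snd p - snd q)) ` (P' \<times> P')"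
  have "finite D" unfolding D_def using finP by simp
  then obtain d where dD: "d \<notin> D" using ex_new_if_finite[OF infinite_UNIV_char_0] by blast
  define P'' where "P'' = sh d ` P'"
  have injf: "inj_on fst P''"
  proof (rule inj_onI)
    fix u w assume u: "u \<in> P''" and w: "w \<in> P''" and e: "fst u = fst w"
    obtain p where p: "p \<in> P'" "u = sh d p" using u unfolding P''_def by blast
    obtain q where q: "q \<in> P'" "w = sh d q" using w unfolding P''_def by blast
    have e2: "fst p + d * snd p = fst q + d * snd q" using e p q unfolding sh_def by simp
    show "u = w"
    proof (cases "snd p = snd q")
      case True
      then have "fst p = fst q" using e2 by simp
      then show ?thesis using True p q unfolding sh_def by simp
    next
      case False
      then have nz: "snd p - snd q \<noteq> 0" by simp
      have "d * (snd p - snd q) = fst q - fst p" using e2 by (simp add: algebra_simps)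
      then have "d = (fst q - fst p) / (snd p - snd q)" using nz by (simp add: field_simps)
      then have "d \<in> D" unfolding D_def using p(1) q(1) by force
      then show ?thesis using dD by blast
    qed
  qed
  have cP: "card P'' = card P'" unfolding P''_def by (rule card_image[OF inj_on_subset[OF inj_sh subset_UNIV]])
  have PP: "finite P'' \<and> P'' \<noteq> {} \<and> inj_on fst P''" using finP neP injf unfolding P''_def by simp
  obtain T'' where T'': "finite T''" "card T'' \<le> f"
    "\<forall>K. convex K \<and> x * real (card P'') \<le> real (card (K \<inter> P'')) \<longrightarrow> T'' \<inter> K \<noteq> {}"
    using assms[unfolded Winj_def, rule_format, OF PP] by blast
  show "\<exists>T. finite T \<and> card T \<le> f \<and>
           (\<forall>K. convex K \<and> real (card (K \<inter> P')) \<ge> x * real (card P') \<longrightarrow> T \<inter> K \<noteq> {})"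
  proof (intro exI[of _ "ish d ` T''"] conjI allI impI)
    show "finite (ish d ` T'')" using T''(1) by simp
    show "card (ish d ` T'') \<le> f" using T''(2) card_image_le[OF T''(1)] le_trans by blast
    fix K :: "pt set" assume KA: "convex K \<and> real (card (K \<inter> P')) \<ge> x * real (card P')"
    have cK: "convex (sh d ` K)" using convex_linear_image[OF linear_sh] KA by blast
    have "sh d ` K \<inter> P'' = sh d ` (K \<inter> P')" unfolding P''_def using inj_sh by (simp add: image_Int)
    then have "card (sh d ` K \<inter> P'') = card (K \<inter> P')" using card_image[OF inj_on_subset[OF inj_sh subset_UNIV]] by simp
    then have "x * real (card P'') \<le> real (card (sh d ` K \<inter> P''))" using KA cP by simp
    then have "T'' \<inter> sh d ` K \<noteq> {}" using T''(3) cK by blast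
    then obtain z k where "z \<in> T''" "k \<in> K" "z = sh d k" by blast
    then have "k \<in> ish d ` T'' \<inter> K" by force
    then show "ish d ` T'' \<inter> K \<noteq> {}" by blast
  qed
qed

lemma Pr_ex: assumes "x > 0" shows "\<exists>f. Pr x f"
  using W_all[OF assms] W_Pr by blast

lemma f2_eq: "x < 1 \<Longrightarrow> f2 x = (LEAST f. Pr x f)"
  unfolding f2_def Pr_def by simp

lemma Pr_ge1:
  assumes P: "Pr x f" and x1: "x \<le> 1" shows "f \<ge> 1"
proof (rule ccontr)
  assume "\<not> f \<ge> 1"
  then have f0: "f = 0" by simp
  have PP: "finite {(0::real, 0::real)} \<and> {(0::real,0::real)} \<noteq> {}" by simp
  from P[unfolded Pr_def, rule_format, OF PP] obtain T where T: "finite T" "card T \<le> f"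
    "\<forall>K. convex K \<and> real (card (K \<inter> {(0::real,0::real)})) \<ge> x * real (card {(0::real,0::real)}) \<longrightarrow> T \<inter> K \<noteq> {}"
    by (elim exE conjE)
  have "T = {}" using T(1,2) f0 by simp
  moreover have "T \<inter> UNIV \<noteq> {}" using T(3)[rule_format, of UNIV] x1 by simp
  ultimately show False by simp
qed

lemma f2_prop:
  assumes "x > 0" shows "Pr x (f2 x) \<and> f2 x \<ge> 1"
proof (cases "x \<ge> 1")
  case True
  have "f2 x = 1" using True unfolding f2_def by simp
  moreover have "Pr x 1" unfolding Pr_def
  proof (intro allI impI)
    fix P' :: "pt set" assume A: "finite P' \<and> P' \<noteq> {}"
    then obtain p where p: "p \<in> P'" by blast
    show "\<exists>T. finite T \<and> card T \<le> 1 \<and>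
           (\<forall>K. convex K \<and> real (card (K \<inter> P')) \<ge> x * real (card P') \<longrightarrow> T \<inter> K \<noteq> {})"
    proof (intro exI[of _ "{p}"] conjI allI impI)
      fix K :: "pt set" assume KA: "convex K \<and> real (card (K \<inter> P')) \<ge> x * real (card P')"
      have fin: "finite P'" using A by blast
      have "card (K \<inter> P') \<le> card P'" using fin by (simp add: card_mono)
      moreover have "real (card P') \<le> x * real (card P')" using True by (simp add: mult_le_cancel_right1)
      ultimately have "card (K \<inter> P') = card P'" using KA by linarith
      then have "K \<inter> P' = P'" using fin by (metis Int_lower2 card_subset_eq)
      then show "{p} \<inter> K \<noteq> {}" using p by blast
    qed auto
  qed
  ultimately show ?thesis by simp
next
  case False
  then have x1: "x < 1" by simp
  obtain f where "Pr x f" using Pr_ex[OF assms] by blast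
  then have "Pr x (LEAST f. Pr x f)" by (rule LeastI)
  moreover have "(LEAST f. Pr x f) \<ge> 1" using Pr_ge1[OF calculation] x1 by simp
  ultimately show ?thesis using f2_eq[OF x1] by simp
qed

lemma choose2_bound:
  assumes "m \<ge> 2"
  shows "real (m choose 2) \<ge> real m ^ 2 / 4"
proof -
  have e: "real (m choose 2) = real m * (real m - 1) / 2"
    using assms by (auto simp add: choose_two field_char_0_class.of_nat_div mod_eq_0_iff_dvd of_nat_diff)
  have "real m / 2 \<le> real m - 1" using assms by simp
  then have "real m * (real m / 2) \<le> real m * (real m - 1)" by (rule mult_left_mono) simp
  then show ?thesis unfolding e by (simp add: power2_eq_square)
qed

lemma sq_sum_bound:
  fixes a :: "nat \<Rightarrow> nat"
  assumes "finite I" "\<forall>i\<in>I. real (a i) \<le> B"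
  shows "(\<Sum>i\<in>I. real (a i) * real (a i)) \<le> B * (\<Sum>i\<in>I. real (a i))"
proof -
  have "(\<Sum>i\<in>I. real (a i) * real (a i)) \<le> (\<Sum>i\<in>I. B * real (a i))"
  proof (rule sum_mono)
    fix i assume "i \<in> I"
    then have "real (a i) \<le> B" using assms(2) by blast
    then show "real (a i) * real (a i) \<le> B * real (a i)" by (rule mult_right_mono) simp
  qed
  also have "\<dots> = B * (\<Sum>i\<in>I. real (a i))" by (simp add: sum_distrib_left)
  finally show ?thesis .
qed

lemma pigeon:
  fixes g :: "nat \<Rightarrow> nat"
  assumes "finite I" "I \<noteq> {}" "N \<le> (\<Sum>i\<in>I. real (g i))"
  shows "\<exists>i\<in>I. real (g i) \<ge> N / real (card I)"
proof (rule ccontr)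
  assume "\<not> (\<exists>i\<in>I. real (g i) \<ge> N / real (card I))"
  then have lt: "\<forall>i\<in>I. real (g i) < N / real (card I)" by (simp add: not_le)
  have "(\<Sum>i\<in>I. real (g i)) < (\<Sum>i\<in>I. N / real (card I))"
    by (rule sum_strict_mono[OF assms(1,2)]) (use lt in blast)
  also have "\<dots> = N" using assms(1,2) by simp
  finally show False using assms(3) by linarith
qed

lemma edges_D:
  fixes PK :: "pt set" and E :: "pt set set"
  assumes "finite PK" "inj_on fst PK"
  shows "card (edges PK \<inter> E) \<le> card {f\<in>PK \<times> PK. fst (fst f) < fst (snd f) \<and> {fst f, snd f} \<in> E}"
proof -
  let ?D = "{f\<in>PK \<times> PK. fst (fst f) < fst (snd f) \<and> {fst f, snd f} \<in> E}"
  have "edges PK \<inter> E \<subseteq> (\<lambda>f. {fst f, snd f}) ` ?D"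
  proof
    fix e assume e: "e \<in> edges PK \<inter> E"
    then obtain p q where pq: "p \<in> PK" "q \<in> PK" "p \<noteq> q" "e = {p, q}" unfolding edges_def by blast
    have "fst p \<noteq> fst q" using assms(2) pq by (meson inj_onD)
    then have "fst p < fst q \<or> fst q < fst p" by linarith
    then show "e \<in> (\<lambda>f. {fst f, snd f}) ` ?D"
    proof
      assume "fst p < fst q"
      then have "(p, q) \<in> ?D" using pq e by auto
      moreover have "e = {fst (p,q), snd (p,q)}" using pq(4) by simp
      ultimately show ?thesis by (rule rev_image_eqI)
    next
      assume "fst q < fst p"
      then have "(q, p) \<in> ?D" using pq e by (auto simp: insert_commute)
      moreover have "e = {fst (q,p), snd (q,p)}" using pq(4) by auto
      ultimately show ?thesis by (rule rev_image_eqI)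
    qed
  qed
  moreover have "finite ?D" using assms(1) by simp
  ultimately have "card (edges PK \<inter> E) \<le> card ((\<lambda>f. {fst f, snd f}) ` ?D)"
    by (intro card_mono) simp_all
  also have "\<dots> \<le> card ?D" using \<open>finite ?D\<close> by (rule card_image_le)
  finally show ?thesis .
qed


lemma main:
  fixes P :: "pt set" and E :: "pt set set" and r :: nat and Ks :: "pt set set"
  assumes finP: "finite P" and neP: "P \<noteq> {}" and gp: "general_position P" and EP: "E \<subseteq> edges P"
    and eps0: "0 < eps" and eps1: "eps \<le> 1" and sg0: "0 < sg" and sg1: "sg \<le> 1" and r1: "r \<ge> 1"
    and Ks: "Ks \<subseteq> restricted_family P E eps sg"
  shows "\<exists>T. finite T \<and> (\<forall>K\<in>Ks. T \<inter> K \<noteq> {}) \<and>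
          real (card T) \<le> 8 * (real r * real (f2 (1/16 * eps * sg * real r))
             + (real r ^ 2 * real (card E)) / (sg * eps ^ 2 * real (card P) ^ 2))"
proof -
  define n where "n = card P"
  define m where "m = nat \<lceil>eps * real n\<rceil>"
  define x where "x = 1/16 * eps * sg * real r"
  define fx where "fx = f2 x"
  define Bd where "Bd = 8 * (real r * real fx + (real r ^ 2 * real (card E)) / (sg * eps ^ 2 * real n ^ 2))"
  have npos: "n > 0" unfolding n_def using finP neP by (simp add: card_gt_0_iff)
  have rpos: "real r > 0" using r1 by simp
  have x0: "x > 0" unfolding x_def using eps0 sg0 rpos by simp
  have fxP: "Pr x fx" and fx1: "fx \<ge> 1" unfolding fx_def using f2_prop[OF x0] by auto
  have epsn: "eps * real n > 0" using eps0 npos by simp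
  have mge: "real m \<ge> eps * real n" unfolding m_def by linarith
  have m1: "m \<ge> 1" unfolding m_def using epsn by linarith
  have finE: "finite E"
  proof -
    have "edges P \<subseteq> Pow P" unfolding edges_def by blast
    then show ?thesis using EP finP by (meson finite_Pow_iff finite_subset)
  qed
  have sec0: "0 \<le> (real r ^ 2 * real (card E)) / (sg * eps ^ 2 * real n ^ 2)"
    using sg0 by simp
  have injP: "inj_on fst P"
  proof (rule inj_onI)
    fix p q assume "p \<in> P" "q \<in> P" "fst p = fst q"
    then show "p = q" using gp unfolding general_position_def by blast
  qed
  have KsR: "\<And>K. K \<in> Ks \<Longrightarrow> convex K \<and> (\<exists>PK. PK \<subseteq> P \<inter> K \<and> card PK = m \<and>
        real (card (edges PK \<inter> E)) \<ge> sg * real (m choose 2))"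
    using Ks unfolding restricted_family_def restricted_def m_def n_def by blast
  have goal: "\<exists>T. finite T \<and> (\<forall>K\<in>Ks. T \<inter> K \<noteq> {}) \<and> real (card T) \<le> Bd"
  proof (cases "n \<le> r")
    case True
    show ?thesis
    proof (intro exI[of _ P] conjI ballI)
      show "finite P" by (rule finP)
      fix K assume "K \<in> Ks"
      then obtain PK where PK: "PK \<subseteq> P \<inter> K" "card PK = m" using KsR by blast
      then have "PK \<noteq> {}" using m1 by auto
      then show "P \<inter> K \<noteq> {}" using PK(1) by blast
    next
      have "real (card P) \<le> real r" using True unfolding n_def by simp
      also have "\<dots> \<le> real r * real fx" using fx1 rpos by simp
      also have "\<dots> \<le> 8 * (real r * real fx)" using rpos by simp
      also have "\<dots> \<le> Bd" unfolding Bd_def using sec0 by simp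
      finally show "real (card P) \<le> Bd" .
    qed
  next
    case False
    then have rn: "r < n" by simp
    define d where "d = n div r + 1"
    have dpos: "d > 0" unfolding d_def by simp
    have nd: "n < r * d"
    proof -
      have "r * (n div r) + n mod r = n" by (rule mult_div_mod_eq)
      moreover have "n mod r < r" using r1 by simp
      ultimately show ?thesis unfolding d_def distrib_left by linarith
    qed
    define \<sigma> where "\<sigma> p = rk P p div d" for p
    have \<sigma>lt: "\<And>p. p \<in> P \<Longrightarrow> \<sigma> p < r"
    proof -
      fix p assume "p \<in> P"
      then have "rk P p < n" unfolding n_def by (rule rk_lt[OF finP])
      then have "rk P p < r * d" using nd by linarith
      then show "\<sigma> p < r" unfolding \<sigma>_def using dpos by (simp add: div_less_iff_less_mult)
    qed
    have \<sigma>ord: "\<And>p q. \<sigma> p < \<sigma> q \<Longrightarrow> fst p < fst q"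
    proof -
      fix p q :: pt assume "\<sigma> p < \<sigma> q"
      then have "rk P p < rk P q" unfolding \<sigma>_def by (metis div_le_mono not_le)
      then show "fst p < fst q" by (rule rk_order[OF finP])
    qed
    have \<sigma>mono: "\<And>p q. p \<in> P \<Longrightarrow> fst p < fst q \<Longrightarrow> \<sigma> p \<le> \<sigma> q"
    proof -
      fix p q :: pt assume "p \<in> P" "fst p < fst q"
      then have "rk P p < rk P q" by (rule rk_less[OF finP])
      then show "\<sigma> p \<le> \<sigma> q" unfolding \<sigma>_def by (simp add: div_le_mono)
    qed
    define S where "S i = {p\<in>P. \<sigma> p = i}" for i
    have finS: "\<And>i. finite (S i)" unfolding S_def using finP by simp
    have injr: "inj_on (rk P) P" by (rule rk_inj[OF finP injP])
    have cS: "\<And>i. card (S i) \<le> d"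
    proof -
      fix i
      have "card (S i) \<le> card {i*d..<i*d+d}"
      proof (rule card_inj_on_le[OF inj_on_subset[OF injr]])
        show "S i \<subseteq> P" unfolding S_def by blast
        show "rk P ` S i \<subseteq> {i*d..<i*d+d}"
        proof
          fix j assume "j \<in> rk P ` S i"
          then have ji: "j div d = i" unfolding S_def \<sigma>_def by blast
          have "j div d * d + j mod d = j" by (rule div_mult_mod_eq)
          then have "i * d + j mod d = j" using ji by simp
          moreover have "j mod d < d" using dpos by simp
          ultimately show "j \<in> {i*d..<i*d+d}" by simp
        qed
      qed simp
      then show "card (S i) \<le> d" by simp
    qed
    have d2: "real d \<le> 2 * real n / real r"
    proof -
      have "real (n div r) \<le> real n / real r" by (rule of_nat_div_le_of_nat)
      moreover have "1 \<le> real n / real r" using rn rpos by simp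
      ultimately show ?thesis unfolding d_def by simp
    qed
    have xS: "\<And>i. x * real (card (S i)) \<le> sg * real m / 8"
    proof -
      fix i
      have "real (card (S i)) \<le> real d" using cS[of i] by simp
      then have "real (card (S i)) \<le> 2 * real n / real r" using d2 by linarith
      then have "x * real (card (S i)) \<le> x * (2 * real n / real r)"
        using x0 by (intro mult_left_mono) simp_all
      also have "\<dots> = sg * (eps * real n) / 8" unfolding x_def using rpos by (simp add: field_simps)
      also have "\<dots> \<le> sg * real m / 8" using mge sg0 by (simp add: mult_left_mono)
      finally show "x * real (card (S i)) \<le> sg * real m / 8" .
    qed
    have "\<forall>i. \<exists>Ti. finite Ti \<and> card Ti \<le> fx \<and>
        (\<forall>K. convex K \<and> real (card (K \<inter> S i)) \<ge> x * real (card (S i)) \<longrightarrow> S i \<noteq> {} \<longrightarrow> Ti \<inter> K \<noteq> {})"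
    proof
      fix i
      show "\<exists>Ti. finite Ti \<and> card Ti \<le> fx \<and>
        (\<forall>K. convex K \<and> real (card (K \<inter> S i)) \<ge> x * real (card (S i)) \<longrightarrow> S i \<noteq> {} \<longrightarrow> Ti \<inter> K \<noteq> {})"
      proof (cases "S i = {}")
        case True then show ?thesis by (intro exI[of _ "{}"]) simp
      next
        case False
        have "finite (S i) \<and> S i \<noteq> {}" using finS False by blast
        from fxP[unfolded Pr_def, rule_format, OF this] obtain Ti where
          "finite Ti" "card Ti \<le> fx" "\<forall>K. convex K \<and> real (card (K \<inter> S i)) \<ge> x * real (card (S i)) \<longrightarrow> Ti \<inter> K \<noteq> {}"
          by (elim exE conjE)
        then show ?thesis by blast
      qed
    qed
    then obtain TA where TA: "\<And>i. finite (TA i)" "\<And>i. card (TA i) \<le> fx"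
      "\<And>i K. convex K \<Longrightarrow> real (card (K \<inter> S i)) \<ge> x * real (card (S i)) \<Longrightarrow> S i \<noteq> {} \<Longrightarrow> TA i \<inter> K \<noteq> {}"
      by metis
    define TAu where "TAu = (\<Union>i<r. TA i)"
    have finTAu: "finite TAu" unfolding TAu_def using TA(1) by simp
    have cTAu: "real (card TAu) \<le> real r * real fx"
    proof -
      have "card TAu \<le> (\<Sum>i<r. card (TA i))" unfolding TAu_def by (rule card_UN_le) simp
      also have "\<dots> \<le> (\<Sum>i<r. fx)" by (rule sum_mono) (rule TA(2))
      also have "\<dots> = r * fx" by simp
      finally show ?thesis by (metis of_nat_le_iff of_nat_mult)
    qed
    define s where "s = nat \<lceil>sg * real m ^ 2 / (8 * real r)\<rceil>"
    have sq0: "sg * real m ^ 2 / (8 * real r) > 0" using sg0 m1 rpos by simp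
    have spos: "s > 0" unfolding s_def using sq0 by simp
    have sge: "real s \<ge> sg * real m ^ 2 / (8 * real r)" unfolding s_def by linarith
    define F where "F i = {f\<in>P \<times> P. \<sigma> (fst f) = i \<and> i < \<sigma> (snd f) \<and> {fst f, snd f} \<in> E}" for i
    define t where "t i = Max (fst ` S i)" for i
    have finF: "\<And>i. finite (F i)" unfolding F_def using finP by simp
    have Fcond: "\<And>i. \<forall>f\<in>F i. fst (fst f) \<le> t i \<and> t i \<le> fst (snd f) \<and> fst (fst f) < fst (snd f)"
    proof
      fix i f assume fF: "f \<in> F i"
      obtain p q where f: "f = (p, q)" by (cases f)
      have pP: "p \<in> P" and sp: "\<sigma> p = i" and sq: "i < \<sigma> q" using fF f unfolding F_def by auto
      have pS: "p \<in> S i" unfolding S_def using pP sp by simp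
      have lt: "\<And>p'. p' \<in> S i \<Longrightarrow> fst p' < fst q"
      proof -
        fix p' assume "p' \<in> S i"
        then have "\<sigma> p' < \<sigma> q" using sq unfolding S_def by simp
        then show "fst p' < fst q" by (rule \<sigma>ord)
      qed
      have "fst p \<le> t i" unfolding t_def using finS[of i] pS by simp
      moreover have "t i \<le> fst q" unfolding t_def using finS[of i] pS lt
        by (subst Max_le_iff) (auto, meson less_imp_le fst_conv)
      ultimately show "fst (fst f) \<le> t i \<and> t i \<le> fst (snd f) \<and> fst (fst f) < fst (snd f)"
        using f lt[OF pS] by simp
    qed
    have "\<forall>i. \<exists>Ti. finite Ti \<and> card Ti * s \<le> card (F i) \<and>
      (\<forall>K. convex K \<and> card {f\<in>F i. fst f \<in> K \<and> snd f \<in> K} \<ge> s \<longrightarrow> Ti \<inter> K \<noteq> {})"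
    proof
      fix i show "\<exists>Ti. finite Ti \<and> card Ti * s \<le> card (F i) \<and>
      (\<forall>K. convex K \<and> card {f\<in>F i. fst f \<in> K \<and> snd f \<in> K} \<ge> s \<longrightarrow> Ti \<inter> K \<noteq> {})"
        by (rule crossing[OF finF spos Fcond])
    qed
    then have "\<exists>TB. \<forall>i. finite (TB i) \<and> card (TB i) * s \<le> card (F i) \<and>
      (\<forall>K. convex K \<and> card {f\<in>F i. fst f \<in> K \<and> snd f \<in> K} \<ge> s \<longrightarrow> TB i \<inter> K \<noteq> {})"
      by (rule choice)
    then obtain TB where TB0: "\<forall>i. finite (TB i) \<and> card (TB i) * s \<le> card (F i) \<and>
      (\<forall>K. convex K \<and> card {f\<in>F i. fst f \<in> K \<and> snd f \<in> K} \<ge> s \<longrightarrow> TB i \<inter> K \<noteq> {})" ..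
    have TB1: "finite (TB i)" for i using TB0[rule_format, of i] by (rule conjunct1)
    have TB2: "card (TB i) * s \<le> card (F i)" for i using conjunct2[OF TB0[rule_format, of i]] by (rule conjunct1)
    have TB3: "TB i \<inter> K \<noteq> {}" if "convex K" "card {f\<in>F i. fst f \<in> K \<and> snd f \<in> K} \<ge> s" for i K
      using conjunct2[OF conjunct2[OF TB0[rule_format, of i]], rule_format, OF conjI[OF that]] .
    note TB = TB1 TB2 TB3
    define TBu where "TBu = (\<Union>i<r. TB i)"
    have finTBu: "finite TBu" unfolding TBu_def using TB(1) by simp
    have sumF: "(\<Sum>i<r. card (F i)) \<le> card E"
    proof -
      have disj: "\<forall>i\<in>{..<r}. \<forall>j\<in>{..<r}. i \<noteq> j \<longrightarrow> F i \<inter> F j = {}" unfolding F_def by auto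
      have "card (\<Union>i\<in>{..<r}. F i) = (\<Sum>i<r. card (F i))"
        by (rule card_UN_disjoint) (use finF disj in auto)
      moreover have "card (\<Union>i\<in>{..<r}. F i) \<le> card E"
      proof (rule card_inj_on_le[where f = "\<lambda>f. {fst f, snd f}"])
        show "inj_on (\<lambda>f. {fst f, snd f}) (\<Union>i\<in>{..<r}. F i)"
        proof (rule inj_onI)
          fix f g assume fU: "f \<in> (\<Union>i\<in>{..<r}. F i)" and gU: "g \<in> (\<Union>i\<in>{..<r}. F i)"
            and eq: "{fst f, snd f} = {fst g, snd g}"
          have of: "fst (fst f) < fst (snd f)" using fU \<sigma>ord unfolding F_def by auto
          have og: "fst (fst g) < fst (snd g)" using gU \<sigma>ord unfolding F_def by auto
          from eq have "(fst f = fst g \<and> snd f = snd g) \<or> (fst f = snd g \<and> snd f = fst g)"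
            by (rule doubleton_eq_iff[THEN iffD1])
          then show "f = g"
          proof
            assume "fst f = fst g \<and> snd f = snd g" then show ?thesis by (simp add: prod_eq_iff)
          next
            assume "fst f = snd g \<and> snd f = fst g"
            then show ?thesis using of og by simp
          qed
        qed
        show "(\<lambda>f. {fst f, snd f}) ` (\<Union>i\<in>{..<r}. F i) \<subseteq> E" unfolding F_def by auto
        show "finite E" by (rule finE)
      qed
      ultimately show ?thesis by simp
    qed
    have cTBu: "real (card TBu) \<le> 8 * real r ^ 2 * real (card E) / (sg * eps ^ 2 * real n ^ 2)"
    proof -
      have "card TBu \<le> (\<Sum>i<r. card (TB i))" unfolding TBu_def by (rule card_UN_le) simp
      then have "card TBu * s \<le> (\<Sum>i<r. card (TB i)) * s" by simp
      also have "\<dots> = (\<Sum>i<r. card (TB i) * s)" by (simp add: sum_distrib_right)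
      also have "\<dots> \<le> (\<Sum>i<r. card (F i))" by (rule sum_mono) (rule TB(2))
      also have "\<dots> \<le> card E" by (rule sumF)
      finally have 1: "real (card TBu) * real s \<le> real (card E)" by (metis of_nat_le_iff of_nat_mult)
      have "real (card TBu) * (sg * real m ^ 2 / (8 * real r)) \<le> real (card TBu) * real s"
        using sge by (rule mult_left_mono) simp
      then have h: "real (card TBu) * (sg * real m ^ 2 / (8 * real r)) \<le> real (card E)" using 1 by linarith
      have 2: "real (card TBu) \<le> real (card E) / (sg * real m ^ 2 / (8 * real r))"
        using h pos_le_divide_eq[OF sq0] by blast
      have "(eps * real n) ^ 2 \<le> real m ^ 2" using mge epsn by (intro power_mono) simp_all
      then have A: "sg * (eps * real n) ^ 2 / (8 * real r) \<le> sg * real m ^ 2 / (8 * real r)"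
        using sg0 rpos by (intro divide_right_mono mult_left_mono) simp_all
      have B: "sg * (eps * real n) ^ 2 / (8 * real r) > 0" using sg0 epsn rpos eps0 npos
        by (intro divide_pos_pos mult_pos_pos zero_less_power) simp_all
      have "real (card E) / (sg * real m ^ 2 / (8 * real r)) \<le> real (card E) / (sg * (eps * real n) ^ 2 / (8 * real r))"
        by (rule divide_left_mono[OF A]) (simp, rule mult_pos_pos[OF sq0 B])
      also have "\<dots> = 8 * real r * real (card E) / (sg * eps ^ 2 * real n ^ 2)"
        using sg0 eps0 npos rpos by (simp add: field_simps power_mult_distrib)
      also have "\<dots> \<le> 8 * real r ^ 2 * real (card E) / (sg * eps ^ 2 * real n ^ 2)"
      proof -
        have "real r \<le> real r ^ 2" using r1 by (simp add: power2_eq_square)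
        then have "8 * real r * real (card E) \<le> 8 * real r ^ 2 * real (card E)"
          by (intro mult_right_mono) simp_all
        then show ?thesis using sg0 eps0 npos by (intro divide_right_mono) simp_all
      qed
      finally show ?thesis using 2 by linarith
    qed
    define T where "T = TAu \<union> TBu"
    show ?thesis
    proof (intro exI[of _ T] conjI ballI)
      show "finite T" unfolding T_def using finTAu finTBu by simp
      have "card T \<le> card TAu + card TBu" unfolding T_def by (rule card_Un_le)
      then have "real (card T) \<le> real (card TAu) + real (card TBu)" by linarith
      also have "\<dots> \<le> real r * real fx + 8 * real r ^ 2 * real (card E) / (sg * eps ^ 2 * real n ^ 2)"
        using cTAu cTBu by linarith
      also have "\<dots> \<le> Bd" unfolding Bd_def using rpos fx1 by (simp add: field_simps)
      finally show "real (card T) \<le> Bd" .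
    next
      fix K assume KK: "K \<in> Ks"
      have cK: "convex K" using KsR[OF KK] by blast
      obtain PK where PK: "PK \<subseteq> P \<inter> K" "card PK = m" "real (card (edges PK \<inter> E)) \<ge> sg * real (m choose 2)"
        using KsR[OF KK] by blast
      have finPK: "finite PK" using PK(1) finP by (meson finite_Int finite_subset)
      define a where "a i = card (PK \<inter> S i)" for i
      show "T \<inter> K \<noteq> {}"
      proof (cases "\<exists>i<r. real (a i) \<ge> sg * real m / 8")
        case True
        then obtain i where ir: "i < r" and ai: "real (a i) \<ge> sg * real m / 8" by blast
        have "PK \<inter> S i \<subseteq> K \<inter> S i" using PK(1) by blast
        then have "a i \<le> card (K \<inter> S i)" unfolding a_def using finS by (simp add: card_mono)
        then have c1: "real (card (K \<inter> S i)) \<ge> x * real (card (S i))" using ai xS[of i] by linarith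
        have "sg * real m / 8 > 0" using sg0 m1 by simp
        then have "a i > 0" using ai by linarith
        then have "S i \<noteq> {}" unfolding a_def by auto
        then have "TA i \<inter> K \<noteq> {}" using TA(3)[OF cK c1] by blast
        then show ?thesis unfolding T_def TAu_def using ir by blast
      next
        case False
        then have small: "\<forall>i\<in>{..<r}. real (a i) \<le> sg * real m / 8" by auto
        have PKU: "PK = (\<Union>i\<in>{..<r}. PK \<inter> S i)"
          using PK(1) \<sigma>lt unfolding S_def by auto
        have suma: "(\<Sum>i<r. a i) = m"
        proof -
          have "card (\<Union>i\<in>{..<r}. PK \<inter> S i) = (\<Sum>i<r. card (PK \<inter> S i))"
            by (rule card_UN_disjoint) (use finPK in \<open>auto simp: S_def\<close>)
          then show ?thesis using PKU PK(2) unfolding a_def by simp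
        qed
        have m2: "m \<ge> 2"
        proof (rule ccontr)
          assume "\<not> m \<ge> 2"
          then have m1': "m = 1" using m1 by simp
          then obtain p where "PK = {p}" using PK(2) by (metis card_1_singletonE)
          then have pP: "p \<in> P" using PK(1) by blast
          have "p \<in> PK \<inter> S (\<sigma> p)" using \<open>PK = {p}\<close> pP unfolding S_def by simp
          then have "a (\<sigma> p) \<ge> 1" unfolding a_def using finPK by (metis One_nat_def Suc_leI card_gt_0_iff empty_iff finite_Int)
          moreover have "real (a (\<sigma> p)) \<le> sg * real m / 8" using small \<sigma>lt[OF pP] by blast
          ultimately show False using sg1 m1' by simp
        qed
        define D where "D = {f\<in>PK \<times> PK. fst (fst f) < fst (snd f) \<and> {fst f, snd f} \<in> E}"
        define Dw where "Dw = {f\<in>D. \<sigma> (fst f) = \<sigma> (snd f)}"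
        define G where "G i = {f\<in>F i. fst f \<in> K \<and> snd f \<in> K}" for i
        have finD: "finite D" unfolding D_def using finPK by simp
        have cD: "real (card D) \<ge> sg * real m ^ 2 / 4"
        proof -
          have "card (edges PK \<inter> E) \<le> card D" unfolding D_def
            by (rule edges_D[OF finPK inj_on_subset[OF injP]]) (use PK(1) in blast)
          then have "sg * real (m choose 2) \<le> real (card D)" using PK(3) by linarith
          moreover have "sg * (real m ^ 2 / 4) \<le> sg * real (m choose 2)"
            using choose2_bound[OF m2] sg0 by (simp add: mult_left_mono)
          ultimately show ?thesis by simp
        qed
        have cDw: "real (card Dw) \<le> sg * real m ^ 2 / 8"
        proof -
          have "Dw \<subseteq> (\<Union>i\<in>{..<r}. (PK \<inter> S i) \<times> (PK \<inter> S i))"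
          proof
            fix f assume fD: "f \<in> Dw"
            then have "fst f \<in> PK" "snd f \<in> PK" "\<sigma> (fst f) = \<sigma> (snd f)" unfolding Dw_def D_def by auto
            moreover have "\<sigma> (fst f) < r" using \<sigma>lt PK(1) calculation(1) by blast
            ultimately show "f \<in> (\<Union>i\<in>{..<r}. (PK \<inter> S i) \<times> (PK \<inter> S i))"
              using PK(1) unfolding S_def by (intro UN_I[of "\<sigma> (fst f)"]) (auto simp: mem_Times_iff)
          qed
          then have "card Dw \<le> card (\<Union>i\<in>{..<r}. (PK \<inter> S i) \<times> (PK \<inter> S i))"
            using finPK by (intro card_mono) auto
          also have "\<dots> \<le> (\<Sum>i<r. card ((PK \<inter> S i) \<times> (PK \<inter> S i)))" by (rule card_UN_le) simp
          also have "\<dots> = (\<Sum>i<r. a i * a i)" unfolding a_def by (simp add: card_cartesian_product)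
          finally have "real (card Dw) \<le> real (\<Sum>i<r. a i * a i)" by (simp only: of_nat_le_iff)
          also have "\<dots> = (\<Sum>i<r. real (a i) * real (a i))" by simp
          also have "\<dots> \<le> (sg * real m / 8) * (\<Sum>i<r. real (a i))" by (rule sq_sum_bound) (use small in auto)
          also have "(\<Sum>i<r. real (a i)) = real m" using suma by (metis of_nat_sum)
          finally show ?thesis by (simp add: power2_eq_square)
        qed
        have DcG: "D - Dw \<subseteq> (\<Union>i\<in>{..<r}. G i)"
        proof
          fix f assume fD: "f \<in> D - Dw"
          obtain p q where f: "f = (p, q)" by (cases f)
          have pK: "p \<in> PK" "q \<in> PK" and lt: "fst p < fst q" and eE: "{p, q} \<in> E"
            using fD f unfolding D_def by auto
          have ne: "\<sigma> p \<noteq> \<sigma> q" using fD f unfolding Dw_def D_def by auto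
          have pP: "p \<in> P" "q \<in> P" and pKK: "p \<in> K" "q \<in> K" using pK PK(1) by auto
          have "\<sigma> p \<le> \<sigma> q" by (rule \<sigma>mono[OF pP(1) lt])
          then have "\<sigma> p < \<sigma> q" using ne by simp
          then have "f \<in> G (\<sigma> p)" unfolding G_def F_def using f pP pKK eE by simp
          moreover have "\<sigma> p < r" by (rule \<sigma>lt[OF pP(1)])
          ultimately show "f \<in> (\<Union>i\<in>{..<r}. G i)" by blast
        qed
        have h1: "real (card (D - Dw)) \<ge> sg * real m ^ 2 / 8"
        proof -
          have "Dw \<subseteq> D" unfolding Dw_def by blast
          then have "card (D - Dw) = card D - card Dw" using finD by (meson card_Diff_subset finite_subset)
          moreover have "card Dw \<le> card D" using \<open>Dw \<subseteq> D\<close> finD by (simp add: card_mono)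
          ultimately have "real (card (D - Dw)) = real (card D) - real (card Dw)" by simp
          then show ?thesis using cD cDw by linarith
        qed
        have h2: "card (D - Dw) \<le> (\<Sum>i<r. card (G i))"
        proof -
          have "card (D - Dw) \<le> card (\<Union>i\<in>{..<r}. G i)"
            using DcG finF unfolding G_def by (intro card_mono) auto
          also have "\<dots> \<le> (\<Sum>i<r. card (G i))" by (rule card_UN_le) simp
          finally show ?thesis .
        qed
        have "real (card (D - Dw)) \<le> real (\<Sum>i<r. card (G i))" using h2 by (simp only: of_nat_le_iff)
        then have "sg * real m ^ 2 / 8 \<le> real (\<Sum>i<r. card (G i))" using h1 by linarith
        also have "real (\<Sum>i<r. card (G i)) = (\<Sum>i<r. real (card (G i)))" by simp
        finally have hs: "sg * real m ^ 2 / 8 \<le> (\<Sum>i<r. real (card (G i)))" .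
        have rne: "{..<r} \<noteq> {}" using r1 by (simp add: lessThan_empty_iff)
        have "\<exists>i\<in>{..<r}. real (card (G i)) \<ge> (sg * real m ^ 2 / 8) / real (card {..<r})"
          by (rule pigeon[OF finite_lessThan rne hs])
        then obtain i where ir: "i \<in> {..<r}" and gi: "real (card (G i)) \<ge> (sg * real m ^ 2 / 8) / real (card {..<r})"
          by blast
        have "(sg * real m ^ 2 / 8) / real (card {..<r}) = sg * real m ^ 2 / (8 * real r)" by simp
        then have "real (card (G i)) \<ge> sg * real m ^ 2 / (8 * real r)" using gi by simp
        then have "s \<le> card (G i)" unfolding s_def by simp
        then have "TB i \<inter> K \<noteq> {}" using TB(3)[OF cK] unfolding G_def by blast
        then show ?thesis unfolding T_def TBu_def using ir by blast
      qed
    qed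
  qed
  then show ?thesis unfolding Bd_def fx_def x_def n_def by simp
qed

theorem mainTheorem4:
  shows "\<exists>C c::real. C > 0 \<and> c > 0 \<and>
    (\<forall>(P::pt set) E eps sg (r::nat) \<K>.
       finite P \<and> P \<noteq> {} \<and> general_position P \<and> E \<subseteq> edges P \<and>
       0 < eps \<and> eps \<le> 1 \<and> 0 < sg \<and> sg \<le> 1 \<and> r \<ge> 1 \<and>
       \<K> \<subseteq> restricted_family P E eps sg \<longrightarrow>
       (\<exists>T::pt set. finite T \<and> (\<forall>K\<in>\<K>. T \<inter> K \<noteq> {}) \<and>
          real (card T) \<le> C * (real r * real (f2 (c * eps * sg * real r))
             + (real r ^ 2 * real (card E)) / (sg * eps ^ 2 * real (card P) ^ 2))))"
  proof (rule exI[of _ 8], rule exI[of _ "1/16"], intro conjI allI impI)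
  show "(8::real) > 0" by simp
  show "(1/16::real) > 0" by simp
  fix P :: "pt set" and E eps sg and r :: nat and Ks
  assume H: "finite P \<and> P \<noteq> {} \<and> general_position P \<and> E \<subseteq> edges P \<and>
       0 < eps \<and> eps \<le> 1 \<and> 0 < sg \<and> sg \<le> 1 \<and> r \<ge> 1 \<and>
       Ks \<subseteq> restricted_family P E eps sg"
  show "\<exists>T::pt set. finite T \<and> (\<forall>K\<in>Ks. T \<inter> K \<noteq> {}) \<and>
          real (card T) \<le> 8 * (real r * real (f2 (1/16 * eps * sg * real r))
             + (real r ^ 2 * real (card E)) / (sg * eps ^ 2 * real (card P) ^ 2))"
    using H by (intro main) auto
qed

end
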